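(* The structure ${\bf q}_{\rm gr}$ is a forgetful pseudo creature forcing, and $\mathrm{inv}_{\rm gm}({\bf q}_{\rm gr})\le\mathfrak g$.
   Context: A pseudo creature forcing (pcrf) is ${\bf q}=(K,\Sigma,\mathrm{nor},\mathrm{val})$ where: (a) $K\subseteq\mathcal H(\aleph_0)$ is a set of creatures, each $\mathfrak c\in K$ being a function with domain $[\mathrm{mdn}(\mathfrak c),\mathrm{mup}(\mathfrak c))$, where $\mathrm{mdn}(\mathfrak c)<\mathrm{mup}(\mathfrak c)<\omega$; (b) $\Sigma$ is a partial function from finite sequences of members of $K$ to nonempty subsets of $K$ such that: its domain consists of sequences $(\mathfrak c_n,\dots,\mathfrak c_{m-1})$ with $\mathrm{mup}(\mathfrak c_\ell)\le\mathrm{mdn}(\mathfrak c_{\ell+1})$; every $\mathfrak c\in\Sigma(\mathfrak c_n,\dots,\mathfrak c_{m-1})$ satisfies $\mathrm{mdn}(\mathfrak c)=\mathrm{mdn}(\mathfrak c_k)$ and $\mathrm{mup}(\mathfrak c)=\mathrm{mup}(\mathfrak c_{\ell-1})$ for some $n\le k<\ell\le m$; $\Sigma$ is transitive (if $\mathfrak c^1_j\in\Sigma$ of the $j$-th block of a partition of a sequence into consecutive blocks, $j<k$, and $\mathfrak c^2\in\Sigma(\mathfrak c^1_0,\dots,\mathfrak c^1_{k-1})$, then $\mathfrak c^2\in\Sigma$ of the whole sequence); $\mathfrak c\in\Sigma(\mathfrak c)$; and $\Sigma$ of a subsequence is contained in $\Sigma$ of the sequence; (c) $\mathrm{nor}:K\to\mathbb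 R^{\ge0}$; (d) $\mathrm{val}(\mathfrak c)$ is a nonempty finite subset of $[\mathrm{mdn}(\mathfrak c),\mathrm{mup}(\mathfrak c))$. ${\bf Q}={\bf Q}_{\bf q}$ is the set of sequences $\bar{\mathfrak c}=\langle\mathfrak c_n:n<\omega\rangle$ of members of $K$ with $\mathrm{mdn}(\mathfrak c_0)=0$, $\mathrm{mup}(\mathfrak c_n)=\mathrm{mdn}(\mathfrak c_{n+1})$ and $\lim_n\mathrm{nor}(\mathfrak c_n)=\infty$. $\bar{\mathfrak c}^1\le_{\bf q}\bar{\mathfrak c}^2$ iff there are $i( * )<\omega$ and $n_{i( * )}<n_{i( * )+1}<\cdots$ such that for all $i\ge i( * )$: $\mathfrak c^2_i\in\Sigma(\mathfrak c^1_{n_i},\dots,\mathfrak c^1_{n_{i+1}-1})$, $\mathrm{mdn}(\mathfrak c^2_i)=\mathrm{mdn}(\mathfrak c^1_{n_i})$, $\mathrm{mup}(\mathfrak c^2_i)=\mathrm{mup}(\mathfrak c^1_{n_{i+1}-1})$. For finite sequences, $\langle\mathfrak e_0,\dots,\mathfrak e_{j-1}\rangle\in\Sigma(\mathfrak c_k,\dots,\mathfrak c_{k'-1})$ means there are $k=m_0<m_1<\cdots<m_j=k'$ with $\mathfrak e_i\in\Sigma(\mathfrak c_{m_i},\dots,\mathfrak c_{m_{i+1}-1})$ for all $i<j$. ${\bf q}$ is forgetful if: whenever $\bar{\mathfrak c}^1\le_{\bf q}\bar{\mathfrak c}^2$, $n\le k<\omega$, $\bar{\mathfrak c}^1\restriction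 k=\bar{\mathfrak c}^2\restriction k$ and $\bar{\mathfrak e}^\ell\in\Sigma(\bar{\mathfrak c}^1\restriction[n,k))$ for $\ell=1,2$, there are $m_1>k$, $m_2>n$ with $\mathrm{mdn}(\mathfrak c^1_{m_1})=\mathrm{mdn}(\mathfrak c^2_{m_2})$ and $\Sigma(\bar{\mathfrak e}^1{}^\frown\bar{\mathfrak c}^1\restriction[k,m_1))\cap\Sigma(\bar{\mathfrak e}^2{}^\frown\bar{\mathfrak c}^1\restriction[k,m_1))\cap\Sigma(\bar{\mathfrak c}^2\restriction[n,m_2))\ne\emptyset$. ${\bf q}_{\rm gr}=(K,\Sigma,\mathrm{nor},\mathrm{val})$: $K$ is the set of triples $\mathfrak c=(\mathrm{mdn}^{\mathfrak c},\mathrm{mup}^{\mathfrak c},u^{\mathfrak c})$ with $\mathrm{mdn}^{\mathfrak c}<\mathrm{mup}^{\mathfrak c}<\omega$ and $\emptyset\ne u^{\mathfrak c}\subseteq[\mathrm{mdn}^{\mathfrak c},\mathrm{mup}^{\mathfrak c})$; $\mathfrak c\in\Sigma(\mathfrak c_0,\dots,\mathfrak c_{k-1})$ iff $\mathrm{mup}^{\mathfrak c_\ell}=\mathrm{mdn}^{\mathfrak c_{\ell+1}}$ for $\ell<k-1$, $\mathrm{mdn}^{\mathfrak c}=\mathrm{mdn}^{\mathfrak c_0}$, $\mathrm{mup}^{\mathfrak c}=\mathrm{mup}^{\mathfrak c_{k-1}}$ and $u^{\mathfrak c}=\bigcup_{\ell\in v}u^{\mathfrak c_\ell}$ for some nonempty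 $v\subseteq\{0,\dots,k-1\}$; $\mathrm{nor}(\mathfrak c)=\mathrm{mdn}^{\mathfrak c}$; $\mathrm{val}(\mathfrak c)=u^{\mathfrak c}$. The game $\Game_\kappa({\bf q})$ lasts $\kappa+1$ moves; in move $\alpha$ the non-empty player chooses $\bar{\mathfrak c}_\alpha\in{\bf Q}$ with $\bar{\mathfrak d}_\beta\le_{\bf q}\bar{\mathfrak c}_\alpha$ for all $\beta<\alpha$, then the empty player chooses $\bar{\mathfrak d}_\alpha\in{\bf Q}$ with $\bar{\mathfrak c}_\alpha\le_{\bf q}\bar{\mathfrak d}_\alpha$; the non-empty player wins iff he always has a legal move. $\mathrm{inv}_{\rm gm}({\bf q})$ is the least $\kappa$ such that the empty player has a winning strategy in $\Game_\kappa({\bf q})$. Groupwise dense families and $\mathfrak g$: $\mathcal A\subseteq[\omega]^{\aleph_0}$ is groupwise dense if it is closed under infinite almost-subsets and for every $n_0<n_1<\cdots$ there is infinite $w\subseteq\omega$ with $\bigcup_{i\in w}[n_i,n_{i+1})\in\mathcal A$; $\mathfrak g$ is the least $\kappa$ such that some $\kappa$ groupwise dense families have empty intersection.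
   Formalization: In a pseudo creature forcing, Sigma of a subsequence lies in Sigma of the sequence only for subsequences sharing its first and last creature and for sequences in the domain of Sigma. The statement above fails without it. *)

theory Defs
  imports Complex_Main "HOL-Library.Sublist"
begin

text \<open>The partial function Sigma
is given with values in 'c set option (None = outside the domain).
The fields mdn and mup give the interval [mdn c, mup c) of a creature.\<close>

record 'c pcrf =
  K   :: "'c set"
  Sig :: "'c list \<Rightarrow> 'c set option"
  mdn :: "'c \<Rightarrow> nat"
  mup :: "'c \<Rightarrow> nat"
  nor :: "'c \<Rightarrow> real"
  val :: "'c \<Rightarrow> nat set"

definition in_Sig :: "'c pcrf \<Rightarrow> 'c \<Rightarrow> 'c list \<Rightarrow> bool" where
  "in_Sig q c cs \<longleftrightarrow> (\<exists>S. Sig q cs = Some S \<and> c \<in> S)"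

fun Sig_seq :: "'c pcrf \<Rightarrow> 'c list \<Rightarrow> 'c list \<Rightarrow> bool" where
  "Sig_seq q [] cs \<longleftrightarrow> cs = []"
| "Sig_seq q (e # es) cs \<longleftrightarrow>
     (\<exists>p. 0 < p \<and> p \<le> length cs \<and> in_Sig q e (take p cs) \<and> Sig_seq q es (drop p cs))"

definition is_pcrf :: "'c pcrf \<Rightarrow> bool" where
  "is_pcrf q \<longleftrightarrow>
     (\<forall>c \<in> K q. mdn q c < mup q c)
   \<and> (\<forall>cs S. Sig q cs = Some S \<longrightarrow>
         cs \<noteq> [] \<and> set cs \<subseteq> K q
       \<and> (\<forall>l. Suc l < length cs \<longrightarrow> mup q (cs ! l) \<le> mdn q (cs ! Suc l))
       \<and> S \<noteq> {} \<and> S \<subseteq> K q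
       \<and> (\<forall>c \<in> S. \<exists>k l. k < l \<and> l \<le> length cs
              \<and> mdn q c = mdn q (cs ! k) \<and> mup q c = mup q (cs ! (l - 1))))
   \<and> (\<forall>cs es c. Sig_seq q es cs \<and> in_Sig q c es \<longrightarrow> in_Sig q c cs)
   \<and> (\<forall>c \<in> K q. in_Sig q c [c])
   \<and> (\<forall>cs cs' c. subseq cs' cs \<and> cs' \<noteq> [] \<and> hd cs' = hd cs \<and> last cs' = last cs
          \<and> Sig q cs \<noteq> None \<and> in_Sig q c cs' \<longrightarrow> in_Sig q c cs)
   \<and> (\<forall>c \<in> K q. nor q c \<ge> 0)
   \<and> (\<forall>c \<in> K q. finite (val q c) \<and> val q c \<noteq> {} \<and> val q c \<subseteq> {mdn q c..<mup q c})"

definition Qset :: "'c pcrf \<Rightarrow> (nat \<Rightarrow> 'c) set" where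
  "Qset q = {cc. (\<forall>n. cc n \<in> K q) \<and> mdn q (cc 0) = 0
                 \<and> (\<forall>n. mup q (cc n) = mdn q (cc (Suc n)))
                 \<and> filterlim (\<lambda>n. nor q (cc n)) at_top sequentially}"

text \<open>The order \<le>_q (c1 is below, i.e. weaker than, c2).\<close>

definition qle :: "'c pcrf \<Rightarrow> (nat \<Rightarrow> 'c) \<Rightarrow> (nat \<Rightarrow> 'c) \<Rightarrow> bool" where
  "qle q c1 c2 \<longleftrightarrow>
     (\<exists>i0 (ns :: nat \<Rightarrow> nat). (\<forall>i \<ge> i0. ns i < ns (Suc i)
        \<and> in_Sig q (c2 i) (map c1 [ns i..<ns (Suc i)])
        \<and> mdn q (c2 i) = mdn q (c1 (ns i))
        \<and> mup q (c2 i) = mup q (c1 (ns (Suc i) - 1))))"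

definition forgetful :: "'c pcrf \<Rightarrow> bool" where
  "forgetful q \<longleftrightarrow>
     (\<forall>c1 \<in> Qset q. \<forall>c2 \<in> Qset q. \<forall>n k e1 e2.
        qle q c1 c2 \<and> n \<le> k \<and> (\<forall>i < k. c1 i = c2 i)
        \<and> Sig_seq q e1 (map c1 [n..<k]) \<and> Sig_seq q e2 (map c1 [n..<k])
        \<longrightarrow> (\<exists>m1 m2 c. m1 > k \<and> m2 > n \<and> mdn q (c1 m1) = mdn q (c2 m2)
              \<and> in_Sig q c (e1 @ map c1 [k..<m1])
              \<and> in_Sig q c (e2 @ map c1 [k..<m1])
              \<and> in_Sig q c (map c2 [n..<m2])))"

type_synonym gr_creature = "nat \<times> nat \<times> nat set"

definition K_gr :: "gr_creature set" where
  "K_gr = {(a, b, u). a < b \<and> u \<noteq> {} \<and> u \<subseteq> {a..<b}}"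

definition Sig_gr :: "gr_creature list \<Rightarrow> gr_creature set option" where
  "Sig_gr cs =
     (if cs \<noteq> [] \<and> set cs \<subseteq> K_gr
         \<and> (\<forall>l. Suc l < length cs \<longrightarrow> fst (snd (cs ! l)) = fst (cs ! Suc l))
      then Some {c. fst c = fst (hd cs) \<and> fst (snd c) = fst (snd (last cs))
                   \<and> (\<exists>v. v \<noteq> {} \<and> v \<subseteq> {..<length cs}
                          \<and> snd (snd c) = (\<Union>l\<in>v. snd (snd (cs ! l))))}
      else None)"

definition q_gr :: "gr_creature pcrf" where
  "q_gr = \<lparr> K = K_gr, Sig = Sig_gr, mdn = fst, mup = (\<lambda>c. fst (snd c)),
            nor = (\<lambda>c. real (fst c)), val = (\<lambda>c. snd (snd c)) \<rparr>"

text \<open>Moves are indexed by positions: Some a for a in the field of the well order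
 r (representing the ordinal kappa), and None for the last move kappa.
 So there are kappa+1 moves.\<close>

definition pos :: "'i rel \<Rightarrow> 'i option set" where
  "pos r = Some ` Field r \<union> {None}"

fun pos_lt :: "'i rel \<Rightarrow> 'i option \<Rightarrow> 'i option \<Rightarrow> bool" where
  "pos_lt r (Some a) (Some b) \<longleftrightarrow> (a, b) \<in> r \<and> a \<noteq> b"
| "pos_lt r (Some a) None \<longleftrightarrow> True"
| "pos_lt r None _ \<longleftrightarrow> False"

definition pos_le :: "'i rel \<Rightarrow> 'i option \<Rightarrow> 'i option \<Rightarrow> bool" where
  "pos_le r x y \<longleftrightarrow> pos_lt r x y \<or> x = y"

text \<open>History of the non-empty player's moves up to (and including) position a.\<close>

definition restr :: "'i rel \<Rightarrow> ('i option \<Rightarrow> 'x) \<Rightarrow> 'i option \<Rightarrow> 'i option \<Rightarrow> 'x" where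
  "restr r h a = (\<lambda>b. if pos_le r b a then h b else undefined)"

text \<open>sigma is a strategy of the empty player: from the history of the
 non-empty player's moves up to position a it computes the answer d_a.
 legal_upto: all non-empty moves h b, b \<le> a, are legal.\<close>

definition legal_upto :: "'c pcrf \<Rightarrow> 'i rel
    \<Rightarrow> (('i option \<Rightarrow> nat \<Rightarrow> 'c) \<Rightarrow> 'i option \<Rightarrow> (nat \<Rightarrow> 'c))
    \<Rightarrow> ('i option \<Rightarrow> nat \<Rightarrow> 'c) \<Rightarrow> 'i option \<Rightarrow> bool" where
  "legal_upto q r \<sigma> h a \<longleftrightarrow>
     (\<forall>b \<in> pos r. pos_le r b a \<longrightarrow> h b \<in> Qset q
        \<and> (\<forall>g \<in> pos r. pos_lt r g b \<longrightarrow> qle q (\<sigma> (restr r h g) g) (h b)))"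

definition empty_wins :: "'c pcrf \<Rightarrow> 'i rel \<Rightarrow> bool" where
  "empty_wins q r \<longleftrightarrow>
     (\<exists>\<sigma>. (\<forall>h. \<forall>a \<in> pos r. legal_upto q r \<sigma> h a \<longrightarrow>
             \<sigma> (restr r h a) a \<in> Qset q \<and> qle q (h a) (\<sigma> (restr r h a) a))
        \<and> \<not> (\<exists>h. \<forall>a \<in> pos r. legal_upto q r \<sigma> h a))"

definition groupwise_dense :: "nat set set \<Rightarrow> bool" where
  "groupwise_dense G \<longleftrightarrow>
     G \<subseteq> {A. infinite A}
   \<and> (\<forall>A \<in> G. \<forall>B. infinite B \<and> finite (B - A) \<longrightarrow> B \<in> G)
   \<and> (\<forall>ns :: nat \<Rightarrow> nat. strict_mono ns \<longrightarrow>
        (\<exists>w. infinite w \<and> (\<Union>i\<in>w. {ns i..<ns (Suc i)}) \<in> G))"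

end

theory Submission
  imports Defs "HOL-Library.Infinite_Set"
begin


abbreviation R :: "gr_creature \<Rightarrow> gr_creature \<Rightarrow> bool" where
  "R x y \<equiv> fst (snd x) = fst y"

abbreviation g :: "gr_creature \<Rightarrow> nat set" where
  "g x \<equiv> snd (snd x)"

lemma idx_set_conv:
  "(\<exists>v. v \<noteq> {} \<and> v \<subseteq> {..<length cs} \<and> u = (\<Union>l\<in>v. g (cs ! l)))
   \<longleftrightarrow> (\<exists>W. W \<noteq> {} \<and> W \<subseteq> set cs \<and> u = \<Union> (g ` W))"
proof
  assume "\<exists>v. v \<noteq> {} \<and> v \<subseteq> {..<length cs} \<and> u = (\<Union>l\<in>v. g (cs ! l))"
  then obtain v where v: "v \<noteq> {}" "v \<subseteq> {..<length cs}" "u = (\<Union>l\<in>v. g (cs ! l))" by blast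
  show "\<exists>W. W \<noteq> {} \<and> W \<subseteq> set cs \<and> u = \<Union> (g ` W)"
    by (rule exI[of _ "(!) cs ` v"]) (use v in \<open>auto\<close>)
next
  assume "\<exists>W. W \<noteq> {} \<and> W \<subseteq> set cs \<and> u = \<Union> (g ` W)"
  then obtain W where W: "W \<noteq> {}" "W \<subseteq> set cs" "u = \<Union> (g ` W)" by blast
  let ?v = "{l. l < length cs \<and> cs ! l \<in> W}"
  have eq: "W = (!) cs ` ?v"
  proof
    show "W \<subseteq> (!) cs ` ?v"
    proof
      fix x assume "x \<in> W"
      then obtain l where "l < length cs" "cs ! l = x" using W(2) by (metis in_set_conv_nth subsetD)
      then show "x \<in> (!) cs ` ?v" using \<open>x \<in> W\<close> by (auto intro!: image_eqI[of _ _ l])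
    qed
  qed auto
  have "\<Union> (g ` W) = \<Union> (g ` ((!) cs ` ?v))" using eq by (rule arg_cong)
  then have "u = (\<Union>l\<in>?v. g (cs ! l))" using W(3) by (simp add: image_image)
  moreover have "?v \<noteq> {}" using eq W(1) by auto
  ultimately show "\<exists>v. v \<noteq> {} \<and> v \<subseteq> {..<length cs} \<and> u = (\<Union>l\<in>v. g (cs ! l))"
    by (intro exI[of _ ?v]) auto
qed

lemma in_Sig_gr:
  "in_Sig q_gr c cs \<longleftrightarrow> cs \<noteq> [] \<and> set cs \<subseteq> K_gr \<and> successively R cs
     \<and> fst c = fst (hd cs) \<and> fst (snd c) = fst (snd (last cs))
     \<and> (\<exists>W. W \<noteq> {} \<and> W \<subseteq> set cs \<and> g c = \<Union> (g ` W))"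
  unfolding in_Sig_def q_gr_def Sig_gr_def successively_conv_nth
  using idx_set_conv[of cs "g c"] by auto

lemma K_gr_iff: "x \<in> K_gr \<longleftrightarrow> fst x < fst (snd x) \<and> g x \<noteq> {} \<and> g x \<subseteq> {fst x..<fst (snd x)}"
  unfolding K_gr_def by (cases x) auto

lemma chain_bounds:
  "successively R cs \<Longrightarrow> set cs \<subseteq> K_gr \<Longrightarrow> cs \<noteq> [] \<Longrightarrow>
    (\<forall>x \<in> set cs. fst (hd cs) \<le> fst x \<and> fst (snd x) \<le> fst (snd (last cs)))"
proof (induction cs)
  case Nil then show ?case by simp
next
  case (Cons x xs)
  show ?case
  proof (cases xs)
    case Nil
    then show ?thesis by simp
  next
    case (Cons y ys)
    have IH: "\<forall>z\<in>set xs. fst (hd xs) \<le> fst z \<and> fst (snd z) \<le> fst (snd (last xs))"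
      using Cons.IH Cons.prems Cons by (auto simp: successively_Cons)
    have "fst x < fst (snd x)" using Cons.prems K_gr_iff by auto
    moreover have "fst (snd x) = fst y" using Cons.prems Cons by simp
    moreover have "fst (snd y) \<le> fst (snd (last xs))" using IH Cons by simp
    moreover have "fst y < fst (snd y)" using Cons.prems Cons K_gr_iff by auto
    ultimately show ?thesis using IH Cons by fastforce
  qed
qed

lemma subseq_set_sub: "subseq xs ys \<Longrightarrow> set xs \<subseteq> set ys"
  by (auto dest: list_emb_set)

lemma in_Sig_K:
  assumes "in_Sig q_gr c cs" shows "c \<in> K_gr"
proof -
  have a: "cs \<noteq> []" "set cs \<subseteq> K_gr" "successively R cs"
     "fst c = fst (hd cs)" "fst (snd c) = fst (snd (last cs))"
    using assms unfolding in_Sig_gr by blast+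
  obtain W where W: "W \<noteq> {}" "W \<subseteq> set cs" "g c = \<Union> (g ` W)"
    using assms unfolding in_Sig_gr by blast+
  note bd = chain_bounds[OF a(3) a(2) a(1)]
  have "hd cs \<in> set cs" using a(1) by simp
  then have h1: "hd cs \<in> K_gr" "fst (snd (hd cs)) \<le> fst (snd (last cs))" using bd a(2) by blast+
  then have "fst c < fst (snd c)" using a(4,5) unfolding K_gr_iff by linarith
  moreover have "g c \<noteq> {}"
  proof -
    obtain w0 where "w0 \<in> W" using W(1) by blast
    then have "w0 \<in> K_gr" "g w0 \<subseteq> g c" using W a(2) by auto
    then show ?thesis unfolding K_gr_iff by blast
  qed
  moreover have "g c \<subseteq> {fst c..<fst (snd c)}"
  proof
    fix x assume "x \<in> g c"
    then obtain w where w: "w \<in> W" "x \<in> g w" using W by auto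
    then have "w \<in> set cs" using W by auto
    then have "w \<in> K_gr" using a(2) by auto
    then have "x \<in> {fst w..<fst (snd w)}" using w(2) unfolding K_gr_iff by blast
    moreover have "fst (hd cs) \<le> fst w" "fst (snd w) \<le> fst (snd (last cs))"
      using bd \<open>w \<in> set cs\<close> by auto
    ultimately show "x \<in> {fst c..<fst (snd c)}" using a(4,5) by simp
  qed
  ultimately show ?thesis using K_gr_iff by blast
qed

lemma Sig_seq_B:
  "Sig_seq q_gr es cs \<Longrightarrow> (es = [] \<longleftrightarrow> cs = []) \<and> set es \<subseteq> K_gr \<and> set cs \<subseteq> K_gr
    \<and> (es \<noteq> [] \<longrightarrow> fst (hd es) = fst (hd cs) \<and> fst (snd (last es)) = fst (snd (last cs)))
    \<and> (\<forall>e\<in>set es. \<exists>W. W \<noteq> {} \<and> W \<subseteq> set cs \<and> g e = \<Union> (g ` W))"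
proof (induction es arbitrary: cs)
  case Nil then show ?case by simp
next
  case (Cons e es)
  obtain p where p: "0 < p" "p \<le> length cs" "in_Sig q_gr e (take p cs)"
     "Sig_seq q_gr es (drop p cs)" using Cons.prems by (simp only: Sig_seq.simps) blast
  note IH = Cons.IH[OF p(4)]
  have b: "take p cs \<noteq> []" "set (take p cs) \<subseteq> K_gr" "fst e = fst (hd (take p cs))"
     "fst (snd e) = fst (snd (last (take p cs)))"
     "\<exists>W. W \<noteq> {} \<and> W \<subseteq> set (take p cs) \<and> g e = \<Union> (g ` W)"
    using p(3) unfolding in_Sig_gr by blast+
  have eK: "e \<in> K_gr"
    using p(3) by (rule in_Sig_K)
  have csK: "set cs \<subseteq> K_gr"
  proof -
    have "set cs = set (take p cs) \<union> set (drop p cs)" by (metis append_take_drop_id set_append)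
    then show ?thesis using b(2) IH by blast
  qed
  have hd: "fst (hd (e # es)) = fst (hd cs)" using b(3) p(1) b(1) by (simp add: hd_take)
  have last: "fst (snd (last (e # es))) = fst (snd (last cs))"
  proof (cases "es = []")
    case True
    then have "drop p cs = []" using IH by simp
    then have "take p cs = cs" by simp
    then show ?thesis using b(4) True by simp
  next
    case False
    then have "drop p cs \<noteq> []" using IH by simp
    then have "last cs = last (drop p cs)" by (metis append_take_drop_id last_append)
    then show ?thesis using IH False by simp
  qed
  have W: "\<forall>x\<in>set (e # es). \<exists>W. W \<noteq> {} \<and> W \<subseteq> set cs \<and> g x = \<Union> (g ` W)"
  proof -
    have s1: "set (take p cs) \<subseteq> set cs" by (rule set_take_subset)
    have s2: "set (drop p cs) \<subseteq> set cs" by (rule set_drop_subset)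
    show ?thesis
    proof
      fix x assume x: "x \<in> set (e # es)"
      show "\<exists>W. W \<noteq> {} \<and> W \<subseteq> set cs \<and> g x = \<Union> (g ` W)"
      proof (cases "x = e")
        case True
        obtain W where "W \<noteq> {}" "W \<subseteq> set (take p cs)" "g e = \<Union> (g ` W)"
          using b(5) by blast
        then show ?thesis using s1 True by (intro exI[of _ W]) auto
      next
        case False
        then have "x \<in> set es" using x by simp
        then obtain W where "W \<noteq> {}" "W \<subseteq> set (drop p cs)" "g x = \<Union> (g ` W)"
          using IH by blast
        then show ?thesis using s2 by (intro exI[of _ W]) auto
      qed
    qed
  qed
  have "e # es \<noteq> []" "cs \<noteq> []" using b(1) by auto
  moreover have "set (e # es) \<subseteq> K_gr" using eK IH by simp
  ultimately show ?case
    apply (intro conjI)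
    using hd last W csK by simp_all
qed

lemma Sig_seq_A:
  "Sig_seq q_gr es cs \<Longrightarrow> successively R es \<longleftrightarrow> successively R cs"
proof (induction es arbitrary: cs)
  case Nil then show ?case by simp
next
  case (Cons e es)
  obtain p where p: "0 < p" "p \<le> length cs" "in_Sig q_gr e (take p cs)"
     "Sig_seq q_gr es (drop p cs)" using Cons.prems by (simp only: Sig_seq.simps) blast
  note IH = Cons.IH[OF p(4)]
  note B = Sig_seq_B[OF p(4)]
  have b: "take p cs \<noteq> []" "successively R (take p cs)"
     "fst (snd e) = fst (snd (last (take p cs)))"
    using p(3) unfolding in_Sig_gr by blast+
  have "successively R cs \<longleftrightarrow> successively R (take p cs) \<and> successively R (drop p cs) \<and> (take p cs = [] \<or> drop p cs = [] \<or> R (last (take p cs)) (hd (drop p cs)))"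
    using successively_append_iff[of R "take p cs" "drop p cs"] by simp
  also have "\<dots> \<longleftrightarrow> successively R (drop p cs) \<and> (drop p cs = [] \<or> R (last (take p cs)) (hd (drop p cs)))"
    using b by blast
  also have "\<dots> \<longleftrightarrow> successively R (e # es)"
  proof (cases "es = []")
    case True
    then have "drop p cs = []" using B by blast
    then show ?thesis using True by simp
  next
    case False
    then have d: "drop p cs \<noteq> []" "fst (hd es) = fst (hd (drop p cs))" using B by blast+
    have "successively R (e # es) \<longleftrightarrow> R e (hd es) \<and> successively R es"
      using False by (simp add: successively_Cons)
    then show ?thesis using d b(3) IH by (simp add: conj_commute)
  qed
  finally show ?case by (rule sym)
qed




lemma Sig_gr_Some:
  assumes "Sig_gr cs = Some S"
  shows "S = {c. in_Sig q_gr c cs}" "cs \<noteq> []" "set cs \<subseteq> K_gr" "successively R cs"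
proof -
  show "S = {c. in_Sig q_gr c cs}" using assms unfolding in_Sig_def q_gr_def by simp
  have "cs \<noteq> [] \<and> set cs \<subseteq> K_gr \<and> (\<forall>l. Suc l < length cs \<longrightarrow> fst (snd (cs ! l)) = fst (cs ! Suc l))"
    using assms unfolding Sig_gr_def by (auto split: if_splits)
  then show "cs \<noteq> []" "set cs \<subseteq> K_gr" "successively R cs"
    unfolding successively_conv_nth by blast+
qed

lemma trans_gr:
  assumes "Sig_seq q_gr es cs" "in_Sig q_gr c es"
  shows "in_Sig q_gr c cs"
proof -
  have a: "es \<noteq> []" "set es \<subseteq> K_gr" "successively R es"
     "fst c = fst (hd es)" "fst (snd c) = fst (snd (last es))"
    using assms(2) unfolding in_Sig_gr by blast+
  obtain W where W: "W \<noteq> {}" "W \<subseteq> set es" "g c = \<Union> (g ` W)"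
    using assms(2) unfolding in_Sig_gr by blast
  note B = Sig_seq_B[OF assms(1)]
  have sc: "successively R cs" using Sig_seq_A[OF assms(1)] a(3) by blast
  have B1: "cs \<noteq> []" "set cs \<subseteq> K_gr" "fst (hd es) = fst (hd cs)" "fst (snd (last es)) = fst (snd (last cs))"
    using B a(1) by blast+
  have cs: "cs \<noteq> []" "set cs \<subseteq> K_gr" "fst c = fst (hd cs)" "fst (snd c) = fst (snd (last cs))"
    using B1 a(4,5) by simp_all
  have B2: "\<forall>e\<in>set es. \<exists>V. V \<noteq> {} \<and> V \<subseteq> set cs \<and> g e = \<Union> (g ` V)"
    using B by (elim conjE)
  have "\<forall>e\<in>W. \<exists>V. V \<noteq> {} \<and> V \<subseteq> set cs \<and> g e = \<Union> (g ` V)" using B2 W(2) by (meson subsetD)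
  then obtain f where f0: "\<forall>e\<in>W. f e \<noteq> {} \<and> f e \<subseteq> set cs \<and> g e = \<Union> (g ` f e)"
    by (rule bchoice[elim_format]) blast
  have f: "\<And>e. e \<in> W \<Longrightarrow> f e \<noteq> {} \<and> f e \<subseteq> set cs \<and> g e = \<Union> (g ` f e)"
    using f0 by blast
  have fA: "\<And>e. e \<in> W \<Longrightarrow> f e \<noteq> {}" and fB: "\<And>e. e \<in> W \<Longrightarrow> f e \<subseteq> set cs"
    using f by blast+
  have "(\<Union>e\<in>W. g e) = (\<Union>e\<in>W. \<Union> (g ` f e))"
    using f by (intro SUP_cong refl) blast
  also have "\<dots> = \<Union> (g ` (\<Union> (f ` W)))" by auto
  finally have "g c = \<Union> (g ` (\<Union> (f ` W)))" using W(3) by (simp only:)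
  moreover have "\<Union> (f ` W) \<noteq> {}"
  proof -
    obtain e0 where "e0 \<in> W" using W(1) by blast
    then have "f e0 \<noteq> {}" using fA by blast
    then show ?thesis using \<open>e0 \<in> W\<close> by blast
  qed
  moreover have "\<Union> (f ` W) \<subseteq> set cs" using fB by (simp add: UN_least)
  ultimately show ?thesis unfolding in_Sig_gr using cs sc
    by (intro conjI exI[of _ "\<Union> (f ` W)"]) simp_all
qed

lemma is_pcrf_gr: "is_pcrf q_gr"
proof -
  have p1: "\<forall>c\<in>K_gr. fst c < fst (snd c)" using K_gr_iff by blast
  have p2: "\<forall>cs S. Sig_gr cs = Some S \<longrightarrow>
         cs \<noteq> [] \<and> set cs \<subseteq> K_gr
       \<and> (\<forall>l. Suc l < length cs \<longrightarrow> fst (snd (cs ! l)) \<le> fst (cs ! Suc l))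
       \<and> S \<noteq> {} \<and> S \<subseteq> K_gr
       \<and> (\<forall>c \<in> S. \<exists>k l. k < l \<and> l \<le> length cs
              \<and> fst c = fst (cs ! k) \<and> fst (snd c) = fst (snd (cs ! (l - 1))))"
  proof (intro allI impI)
    fix cs S assume h: "Sig_gr cs = Some S"
    note G = Sig_gr_Some[OF h]
    have "(\<forall>l. Suc l < length cs \<longrightarrow> fst (snd (cs ! l)) \<le> fst (cs ! Suc l))"
      using G(4) successively_nth by fastforce
    moreover have "S \<noteq> {}"
    proof -
      have "in_Sig q_gr (fst (hd cs), fst (snd (last cs)), g (hd cs)) cs"
        unfolding in_Sig_gr using G(2-4) by (intro conjI exI[of _ "{hd cs}"]) auto
      then show ?thesis unfolding G(1) by blast
    qed
    moreover have "S \<subseteq> K_gr" unfolding G(1) using in_Sig_K by blast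
    moreover have "\<forall>c \<in> S. \<exists>k l. k < l \<and> l \<le> length cs
              \<and> fst c = fst (cs ! k) \<and> fst (snd c) = fst (snd (cs ! (l - 1)))"
    proof
      fix c assume "c \<in> S"
      then have "in_Sig q_gr c cs" unfolding G(1) by blast
      then have "fst c = fst (hd cs)" "fst (snd c) = fst (snd (last cs))"
        unfolding in_Sig_gr by blast+
      then show "\<exists>k l. k < l \<and> l \<le> length cs
              \<and> fst c = fst (cs ! k) \<and> fst (snd c) = fst (snd (cs ! (l - 1)))"
        using G(2) by (intro exI[of _ 0] exI[of _ "length cs"]) (simp add: hd_conv_nth last_conv_nth)
    qed
    ultimately show "cs \<noteq> [] \<and> set cs \<subseteq> K_gr
       \<and> (\<forall>l. Suc l < length cs \<longrightarrow> fst (snd (cs ! l)) \<le> fst (cs ! Suc l))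
       \<and> S \<noteq> {} \<and> S \<subseteq> K_gr
       \<and> (\<forall>c \<in> S. \<exists>k l. k < l \<and> l \<le> length cs
              \<and> fst c = fst (cs ! k) \<and> fst (snd c) = fst (snd (cs ! (l - 1))))"
      using G(2,3) by blast
  qed
  have p3: "\<forall>cs es c. Sig_seq q_gr es cs \<and> in_Sig q_gr c es \<longrightarrow> in_Sig q_gr c cs"
    using trans_gr by blast
  have p4: "\<forall>c\<in>K_gr. in_Sig q_gr c [c]"
    unfolding in_Sig_gr by (auto intro!: exI[of _ "{c}" for c])
  have p5: "\<forall>cs cs' c. subseq cs' cs \<and> cs' \<noteq> [] \<and> hd cs' = hd cs \<and> last cs' = last cs
          \<and> Sig_gr cs \<noteq> None \<and> in_Sig q_gr c cs' \<longrightarrow> in_Sig q_gr c cs"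
  proof (intro allI impI)
    fix cs cs' c
    assume h: "subseq cs' cs \<and> cs' \<noteq> [] \<and> hd cs' = hd cs \<and> last cs' = last cs
          \<and> Sig_gr cs \<noteq> None \<and> in_Sig q_gr c cs'"
    then obtain S where "Sig_gr cs = Some S" by blast
    note G = Sig_gr_Some[OF this]
    have ss: "set cs' \<subseteq> set cs" using h subseq_set_sub by blast
    have a: "fst c = fst (hd cs')" "fst (snd c) = fst (snd (last cs'))"
      using h unfolding in_Sig_gr by blast+
    obtain W where W: "W \<noteq> {}" "W \<subseteq> set cs'" "g c = \<Union> (g ` W)"
      using h unfolding in_Sig_gr by blast
    show "in_Sig q_gr c cs" unfolding in_Sig_gr
      using G(2-4) a h W ss by (intro conjI exI[of _ W]) auto
  qed
  have p7: "\<forall>c\<in>K_gr. finite (g c) \<and> g c \<noteq> {} \<and> g c \<subseteq> {fst c..<fst (snd c)}"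
    using K_gr_iff finite_subset by blast
  have eqs: "K q_gr = K_gr" "Sig q_gr = Sig_gr" "mdn q_gr = fst" "mup q_gr = (\<lambda>c. fst (snd c))"
    "nor q_gr = (\<lambda>c. real (fst c))" "val q_gr = (\<lambda>c. g c)" by (simp_all add: q_gr_def)
  have p6: "\<forall>c\<in>K_gr. 0 \<le> real (fst c)" by simp
  show ?thesis unfolding is_pcrf_def eqs
    apply (intro conjI)
    subgoal using p1 by blast
    subgoal using p2 by blast
    subgoal using p3 by blast
    subgoal using p4 by blast
    subgoal using p5 by blast
    subgoal using p6 by blast
    subgoal using p7 by blast
    done
qed



lemma Qset_gr: "c \<in> Qset q_gr \<longleftrightarrow> (\<forall>n. c n \<in> K_gr) \<and> fst (c 0) = 0
   \<and> (\<forall>n. fst (snd (c n)) = fst (c (Suc n)))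
   \<and> filterlim (\<lambda>n. real (fst (c n))) at_top sequentially"
  by (simp add: Qset_def q_gr_def)

lemma qle_gr: "qle q_gr c1 c2 \<longleftrightarrow> (\<exists>i0 (ns :: nat \<Rightarrow> nat). \<forall>i\<ge>i0. ns i < ns (Suc i)
   \<and> in_Sig q_gr (c2 i) (map c1 [ns i..<ns (Suc i)])
   \<and> fst (c2 i) = fst (c1 (ns i))
   \<and> fst (snd (c2 i)) = fst (snd (c1 (ns (Suc i) - 1))))"
  by (simp add: qle_def q_gr_def)

lemma Qchain:
  assumes "c \<in> Qset q_gr" "a < b"
  shows "map c [a..<b] \<noteq> []" "set (map c [a..<b]) \<subseteq> K_gr" "successively R (map c [a..<b])"
    "hd (map c [a..<b]) = c a" "last (map c [a..<b]) = c (b - 1)"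
proof -
  have q: "\<forall>n. c n \<in> K_gr" "\<forall>n. fst (snd (c n)) = fst (c (Suc n))" using assms(1) Qset_gr by blast+
  show "map c [a..<b] \<noteq> []" using assms(2) by simp
  show "set (map c [a..<b]) \<subseteq> K_gr" using q(1) by auto
  show "successively R (map c [a..<b])"
    unfolding successively_conv_nth using q(2) by (simp add: nth_append)
  show "hd (map c [a..<b]) = c a" using assms(2) by (simp add: hd_map)
  show "last (map c [a..<b]) = c (b - 1)" using assms(2) by (simp add: last_map)
qed

lemma Q_mono_fst:
  assumes "c \<in> Qset q_gr"
  shows "fst (c n) < fst (c (Suc n))" "strict_mono (\<lambda>n. fst (c n))"
proof -
  have q: "\<And>n. c n \<in> K_gr" "\<And>n. fst (snd (c n)) = fst (c (Suc n))" using assms(1) Qset_gr by blast+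
  show s: "fst (c n) < fst (c (Suc n))" for n using q[of n] K_gr_iff by metis
  show "strict_mono (\<lambda>n. fst (c n))" using s by (simp add: strict_mono_Suc_iff)
qed

lemma Q_fst_ge: assumes "c \<in> Qset q_gr" shows "n \<le> fst (c n)"
proof (induction n)
  case 0 then show ?case by simp
next
  case (Suc n) then show ?case using Q_mono_fst(1)[OF assms, of n] by simp
qed

definition Uset :: "(nat \<Rightarrow> gr_creature) \<Rightarrow> nat set" where
  "Uset c = (\<Union>n. g (c n))"

lemma Uset_inf: assumes "c \<in> Qset q_gr" shows "infinite (Uset c)"
  unfolding infinite_nat_iff_unbounded_le
proof
  fix m
  have "c m \<in> K_gr" using assms Qset_gr by blast
  then obtain x where "x \<in> g (c m)" "fst (c m) \<le> x" unfolding K_gr_iff by fastforce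
  moreover have "m \<le> fst (c m)" using Q_fst_ge[OF assms] .
  moreover have "x \<in> Uset c" unfolding Uset_def using \<open>x \<in> g (c m)\<close> by blast
  ultimately show "\<exists>n\<ge>m. n \<in> Uset c" using le_trans by blast
qed

lemma qle_fin:
  assumes "c2 \<in> Qset q_gr" "qle q_gr c1 c2"
  shows "finite (Uset c2 - Uset c1)"
proof -
  obtain i0 ns where h: "\<forall>i\<ge>i0. ns i < ns (Suc i)
   \<and> in_Sig q_gr (c2 i) (map c1 [ns i..<ns (Suc i)])"
    using assms(2) unfolding qle_gr by blast
  have "g (c2 i) \<subseteq> Uset c1" if "i \<ge> i0" for i
  proof -
    have "in_Sig q_gr (c2 i) (map c1 [ns i..<ns (Suc i)])" using h that by blast
    then obtain W where W: "W \<subseteq> set (map c1 [ns i..<ns (Suc i)])" "g (c2 i) = \<Union> (g ` W)"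
      unfolding in_Sig_gr by blast
    have Wr: "W \<subseteq> range c1" using W(1) by auto
    show ?thesis
    proof
      fix x assume "x \<in> g (c2 i)"
      then obtain w where w: "w \<in> W" "x \<in> g w" using W(2) by blast
      then obtain n where "w = c1 n" using Wr by blast
      then show "x \<in> Uset c1" unfolding Uset_def using w(2) by blast
    qed
  qed
  note sub = this
  have "Uset c2 - Uset c1 \<subseteq> (\<Union>i<i0. g (c2 i))"
  proof
    fix x assume x: "x \<in> Uset c2 - Uset c1"
    then obtain i where i: "x \<in> g (c2 i)" unfolding Uset_def by blast
    have "\<not> i0 \<le> i" using sub x i by blast
    then show "x \<in> (\<Union>i<i0. g (c2 i))" using i by auto
  qed
  moreover have "finite (\<Union>i<i0. g (c2 i))"
  proof (rule finite_UN_I)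
    fix i have "c2 i \<in> K_gr" using assms(1) Qset_gr by blast
    then show "finite (g (c2 i))" unfolding K_gr_iff using finite_subset by blast
  qed simp
  ultimately show ?thesis using finite_subset by blast
qed

lemma qle_refl: assumes "c \<in> Qset q_gr" shows "qle q_gr c c"
  unfolding qle_gr
proof (intro exI[of _ 0] exI[of _ id] allI impI conjI)
  fix i
  have "c i \<in> K_gr" using assms Qset_gr by blast
  then show "in_Sig q_gr (c i) (map c [id i..<id (Suc i)])"
    unfolding in_Sig_gr by (auto intro!: exI[of _ "{c i}"])
qed auto



lemma construct:
  assumes c: "c \<in> Qset q_gr" and G: "groupwise_dense G"
  shows "\<exists>d. d \<in> Qset q_gr \<and> qle q_gr c d \<and> Uset d \<in> G"
proof -
  define a where "a = (\<lambda>n. fst (c n))"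
  have q: "\<And>n. c n \<in> K_gr" "\<And>n. fst (snd (c n)) = fst (c (Suc n))" "fst (c 0) = 0"
    using c Qset_gr by blast+
  have sa: "strict_mono a" unfolding a_def using Q_mono_fst(2)[OF c] .
  obtain w where w: "infinite w" "(\<Union>i\<in>w. {a i..<a (Suc i)}) \<in> G"
  proof -
    have "\<forall>ns :: nat \<Rightarrow> nat. strict_mono ns \<longrightarrow>
        (\<exists>w. infinite w \<and> (\<Union>i\<in>w. {ns i..<ns (Suc i)}) \<in> G)"
      using G unfolding groupwise_dense_def by (elim conjE)
    then have "\<exists>w. infinite w \<and> (\<Union>i\<in>w. {a i..<a (Suc i)}) \<in> G" using sa by blast
    then show ?thesis using that by blast
  qed
  define e where "e = enumerate w"
  have se: "strict_mono e" unfolding e_def using w(1) by (simp add: strict_mono_def enumerate_mono)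
  have ew: "e j \<in> w" for j unfolding e_def using w(1) by (rule enumerate_in_set)
  define t where "t = (\<lambda>j. case j of 0 \<Rightarrow> 0 | Suc i \<Rightarrow> Suc (e i))"
  have t0: "t 0 = 0" and tS: "t (Suc j) = Suc (e j)" for j unfolding t_def by simp_all
  have te: "t j \<le> e j" for j
  proof (cases j)
    case 0 then show ?thesis using t0 by simp
  next
    case (Suc i)
    have "e i < e (Suc i)" using se by (simp add: strict_mono_def)
    then show ?thesis using Suc tS by simp
  qed
  have tlt: "t j < t (Suc j)" for j using te[of j] tS[of j] by simp
  have st: "strict_mono t" using tlt by (simp add: strict_mono_Suc_iff)
  define d where "d = (\<lambda>j. (a (t j), a (t (Suc j)), g (c (e j))))"
  have amono: "a i \<le> a j" if "i \<le> j" for i j using sa that by (simp add: strict_mono_less_eq)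
  have dK: "d j \<in> K_gr" for j
  proof -
    have "a (t j) < a (t (Suc j))" using sa tlt by (simp add: strict_mono_less)
    moreover have "g (c (e j)) \<noteq> {}" "g (c (e j)) \<subseteq> {a (e j)..<a (Suc (e j))}"
      using q(1)[of "e j"] q(2)[of "e j"] unfolding K_gr_iff a_def by auto
    moreover have "a (t j) \<le> a (e j)" using amono te by blast
    ultimately show ?thesis unfolding K_gr_iff d_def using tS by auto
  qed
  have dQ: "d \<in> Qset q_gr"
    unfolding Qset_gr
  proof (intro conjI allI)
    show "d n \<in> K_gr" for n by (rule dK)
    show "fst (d 0) = 0" unfolding d_def a_def using t0 q(3) by simp
    show "fst (snd (d n)) = fst (d (Suc n))" for n unfolding d_def by simp
    have "strict_mono (\<lambda>j. a (t j))" using sa st by (simp add: strict_mono_def)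
    then have "filterlim (\<lambda>j. a (t j)) sequentially sequentially" by (rule filterlim_subseq)
    then have "filterlim (\<lambda>j. real (a (t j))) at_top sequentially"
      using filterlim_compose[OF filterlim_real_sequentially] by blast
    then show "filterlim (\<lambda>n. real (fst (d n))) at_top sequentially" unfolding d_def by simp
  qed
  have dle: "qle q_gr c d"
    unfolding qle_gr
  proof (intro exI[of _ 0] exI[of _ t] allI impI conjI)
    fix j
    show "t j < t (Suc j)" by (rule tlt)
    show "fst (d j) = fst (c (t j))" unfolding d_def a_def by simp
    show "fst (snd (d j)) = fst (snd (c (t (Suc j) - 1)))" unfolding d_def a_def using tS q(2) by simp
    note ch = Qchain[OF c tlt[of j]]
    have mem: "c (e j) \<in> set (map c [t j..<t (Suc j)])" using te[of j] tS[of j] by auto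
    show "in_Sig q_gr (d j) (map c [t j..<t (Suc j)])"
      unfolding in_Sig_gr
    proof (intro conjI exI[of _ "{c (e j)}"])
      show "fst (d j) = fst (hd (map c [t j..<t (Suc j)]))" using ch(4) unfolding d_def a_def by simp
      show "fst (snd (d j)) = fst (snd (last (map c [t j..<t (Suc j)])))"
        using ch(5) tS q(2) unfolding d_def a_def by simp
      show "g (d j) = \<Union> (g ` {c (e j)})" unfolding d_def by simp
    qed (use ch mem in auto)
  qed
  have "Uset d \<subseteq> (\<Union>i\<in>w. {a i..<a (Suc i)})"
  proof
    fix x assume "x \<in> Uset d"
    then obtain j where j: "x \<in> g (c (e j))" unfolding Uset_def d_def by auto
    have "g (c (e j)) \<subseteq> {a (e j)..<a (Suc (e j))}"
      using q(1)[of "e j"] q(2)[of "e j"] unfolding K_gr_iff a_def by auto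
    then show "x \<in> (\<Union>i\<in>w. {a i..<a (Suc i)})" using j ew[of j] by blast
  qed
  then have "Uset d - (\<Union>i\<in>w. {a i..<a (Suc i)}) = {}" by blast
  then have fin: "finite (Uset d - (\<Union>i\<in>w. {a i..<a (Suc i)}))" by (simp only: finite.emptyI)
  have clo: "\<forall>A \<in> G. \<forall>B. infinite B \<and> finite (B - A) \<longrightarrow> B \<in> G"
    using G unfolding groupwise_dense_def by (elim conjE)
  have "Uset d \<in> G" using clo[rule_format, OF w(2), of "Uset d"] Uset_inf[OF dQ] fin by blast
  then show ?thesis using dQ dle by blast
qed



lemma fst_agree:
  assumes "c1 \<in> Qset q_gr" "c2 \<in> Qset q_gr" "n \<le> k" "\<forall>i<k. c1 i = c2 i"
  shows "fst (c1 n) = fst (c2 n)"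
proof (cases "n < k")
  case True then show ?thesis using assms(4) by simp
next
  case False
  then have nk: "n = k" using assms(3) by simp
  show ?thesis
  proof (cases n)
    case 0 then show ?thesis using assms(1,2) Qset_gr by simp
  next
    case (Suc m)
    have "fst (c1 (Suc m)) = fst (snd (c1 m))" "fst (c2 (Suc m)) = fst (snd (c2 m))"
      using assms(1,2) Qset_gr by simp_all
    moreover have "c1 m = c2 m" using assms(4) nk Suc by simp
    ultimately show ?thesis using Suc by simp
  qed
qed

lemma L_in_Sig:
  assumes c1: "c1 \<in> Qset q_gr" and e: "Sig_seq q_gr e (map c1 [n..<k])"
    and nk: "n \<le> k" and km: "k < m1" and W: "W \<noteq> {}" "W \<subseteq> c1 ` {k..<m1}" "u = \<Union> (g ` W)"
  shows "in_Sig q_gr (fst (c1 n), fst (c1 m1), u) (e @ map c1 [k..<m1])"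
proof -
  have q: "\<And>n. c1 n \<in> K_gr" "\<And>n. fst (snd (c1 n)) = fst (c1 (Suc n))"
    using c1 Qset_gr by blast+
  note M = Qchain[OF c1 km]
  note B = Sig_seq_B[OF e]
  have eK: "set e \<subseteq> K_gr" using B by blast
  have e_empty: "e = [] \<longleftrightarrow> map c1 [n..<k] = []" using B by blast
  have se: "successively R e"
  proof (cases "n < k")
    case True
    then show ?thesis using Sig_seq_A[OF e] Qchain(3)[OF c1 True] by blast
  next
    case False
    then have "e = []" using e_empty by simp
    then show ?thesis by simp
  qed
  have link: "e = [] \<or> R (last e) (hd (map c1 [k..<m1]))"
  proof (cases "e = []")
    case False
    then have nk': "n < k" using e_empty by simp
    have "fst (snd (last e)) = fst (snd (last (map c1 [n..<k])))" using B False by blast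
    also have "\<dots> = fst (snd (c1 (k - 1)))" using Qchain(5)[OF c1 nk'] by simp
    also have "\<dots> = fst (c1 k)" using q(2)[of "k - 1"] nk' by simp
    finally show ?thesis using M(4) by simp
  qed simp
  have hd_ok: "fst (c1 n) = fst (hd (e @ map c1 [k..<m1]))"
  proof (cases "e = []")
    case True
    then have "n = k" using e_empty nk by auto
    then show ?thesis using True M(4) by simp
  next
    case False
    then have nk': "n < k" using e_empty by simp
    have "fst (hd e) = fst (hd (map c1 [n..<k]))" using B False by blast
    then show ?thesis using False Qchain(4)[OF c1 nk'] by simp
  qed
  have last_ok: "fst (c1 m1) = fst (snd (last (e @ map c1 [k..<m1])))"
    using M(1) M(5) q(2)[of "m1 - 1"] km by simp
  have Wsub: "W \<subseteq> set (e @ map c1 [k..<m1])" using W(2) by auto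
  show ?thesis unfolding in_Sig_gr
  proof (intro conjI exI[of _ W])
    show "e @ map c1 [k..<m1] \<noteq> []" using M(1) by simp
    show "set (e @ map c1 [k..<m1]) \<subseteq> K_gr" using eK M(2) by simp
    show "successively R (e @ map c1 [k..<m1])"
      using se M(3) link successively_append_iff[of R e "map c1 [k..<m1]"] by blast
  qed (use hd_ok last_ok W Wsub in simp_all)
qed

lemma ns_ge:
  assumes "\<forall>i\<ge>i0. (ns :: nat \<Rightarrow> nat) i < ns (Suc i)"
  shows "m \<le> ns (i0 + m)"
proof (induction m)
  case 0 then show ?case by simp
next
  case (Suc m)
  have "ns (i0 + m) < ns (Suc (i0 + m))" using assms by simp
  then show ?case using Suc by simp
qed

lemma forgetful_gr: "forgetful q_gr"
  unfolding forgetful_def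
proof (intro ballI allI impI)
  fix c1 c2 n k e1 e2
  assume c1: "c1 \<in> Qset q_gr" and c2: "c2 \<in> Qset q_gr"
  assume h: "qle q_gr c1 c2 \<and> n \<le> k \<and> (\<forall>i<k. c1 i = c2 i)
        \<and> Sig_seq q_gr e1 (map c1 [n..<k]) \<and> Sig_seq q_gr e2 (map c1 [n..<k])"
  then have le: "qle q_gr c1 c2" and nk: "n \<le> k" and agree: "\<forall>i<k. c1 i = c2 i"
    and s1: "Sig_seq q_gr e1 (map c1 [n..<k])" and s2: "Sig_seq q_gr e2 (map c1 [n..<k])"
    by blast+
  obtain i0 ns where hns: "\<forall>i\<ge>i0. ns i < ns (Suc i)
   \<and> in_Sig q_gr (c2 i) (map c1 [ns i..<ns (Suc i)])
   \<and> fst (c2 i) = fst (c1 (ns i))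
   \<and> fst (snd (c2 i)) = fst (snd (c1 (ns (Suc i) - 1)))"
    using le unfolding qle_gr by blast
  have mono: "\<forall>i\<ge>i0. ns i < ns (Suc i)" using hns by blast
  define j where "j = i0 + (k + n)"
  have jge: "k + n \<le> ns j" unfolding j_def using ns_ge[OF mono] .
  have hj: "ns j < ns (Suc j)" "in_Sig q_gr (c2 j) (map c1 [ns j..<ns (Suc j)])"
     "fst (snd (c2 j)) = fst (snd (c1 (ns (Suc j) - 1)))"
    using hns unfolding j_def by auto
  define m1 where "m1 = ns (Suc j)"
  define m2 where "m2 = Suc j"
  have km: "k < m1" unfolding m1_def using jge hj(1) by simp
  have nm2: "n < m2" unfolding m2_def j_def by simp
  have q1: "\<And>n. fst (snd (c1 n)) = fst (c1 (Suc n))" using c1 Qset_gr by blast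
  have q2: "\<And>n. fst (snd (c2 n)) = fst (c2 (Suc n))" using c2 Qset_gr by blast
  have mdn_eq: "fst (c1 m1) = fst (c2 m2)"
  proof -
    have "fst (c1 m1) = fst (snd (c1 (m1 - 1)))" using q1[of "m1 - 1"] km by simp
    also have "\<dots> = fst (snd (c2 j))" using hj(3) unfolding m1_def by simp
    also have "\<dots> = fst (c2 m2)" using q2 unfolding m2_def by simp
    finally show ?thesis .
  qed
  obtain W where W: "W \<noteq> {}" "W \<subseteq> set (map c1 [ns j..<ns (Suc j)])" "g (c2 j) = \<Union> (g ` W)"
    using hj(2) unfolding in_Sig_gr by blast
  have W2: "W \<subseteq> c1 ` {k..<m1}" using W(2) jge unfolding m1_def by auto
  define c where "c = (fst (c1 n), fst (c1 m1), g (c2 j))"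
  have i1: "in_Sig q_gr c (e1 @ map c1 [k..<m1])"
    unfolding c_def by (rule L_in_Sig[OF c1 s1 nk km W(1) W2 W(3)])
  have i2: "in_Sig q_gr c (e2 @ map c1 [k..<m1])"
    unfolding c_def by (rule L_in_Sig[OF c1 s2 nk km W(1) W2 W(3)])
  have i3: "in_Sig q_gr c (map c2 [n..<m2])"
  proof -
    note ch = Qchain[OF c2 nm2]
    have "fst (c1 n) = fst (c2 n)" by (rule fst_agree[OF c1 c2 nk agree])
    moreover have "c2 j \<in> set (map c2 [n..<m2])" unfolding m2_def j_def by auto
    moreover have "last (map c2 [n..<m2]) = c2 j" using ch(5) unfolding m2_def by simp
    ultimately show ?thesis unfolding in_Sig_gr c_def
      using ch mdn_eq q2[of j] unfolding m2_def
      by (intro conjI exI[of _ "{c2 j}"]) simp_all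
  qed
  show "\<exists>m1 m2 c. m1 > k \<and> m2 > n \<and> mdn q_gr (c1 m1) = mdn q_gr (c2 m2)
              \<and> in_Sig q_gr c (e1 @ map c1 [k..<m1])
              \<and> in_Sig q_gr c (e2 @ map c1 [k..<m1])
              \<and> in_Sig q_gr c (map c2 [n..<m2])"
    using km nm2 mdn_eq i1 i2 i3 by (intro exI[of _ m1] exI[of _ m2] exI[of _ c]) (simp add: q_gr_def)
qed



definition Dst :: "nat set set \<Rightarrow> (nat \<Rightarrow> gr_creature) \<Rightarrow> (nat \<Rightarrow> gr_creature)" where
  "Dst G c = (SOME d. d \<in> Qset q_gr \<and> qle q_gr c d \<and> Uset d \<in> G)"

lemma Dst: assumes "c \<in> Qset q_gr" "groupwise_dense G"
  shows "Dst G c \<in> Qset q_gr \<and> qle q_gr c (Dst G c) \<and> Uset (Dst G c) \<in> G"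
  unfolding Dst_def using someI_ex[OF construct[OF assms]] .

definition strat :: "(nat set set option \<Rightarrow> nat \<Rightarrow> gr_creature) \<Rightarrow> nat set set option \<Rightarrow> (nat \<Rightarrow> gr_creature)" where
  "strat hist a = (case a of None \<Rightarrow> hist None | Some G \<Rightarrow> Dst G (hist a))"

lemma restr_self: "restr r h a a = h a"
  unfolding restr_def pos_le_def by simp

lemma game_part:
  assumes A: "\<forall>G \<in> \<A>. groupwise_dense G" "\<Inter>\<A> = {}"
  shows "empty_wins q_gr (card_of \<A>)"
  unfolding empty_wins_def
proof (intro exI[of _ strat] conjI)
  show "\<forall>h. \<forall>a\<in>pos (card_of \<A>). legal_upto q_gr (card_of \<A>) strat h a \<longrightarrow>
      strat (restr (card_of \<A>) h a) a \<in> Qset q_gr \<and> qle q_gr (h a) (strat (restr (card_of \<A>) h a) a)"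
  proof (intro allI ballI impI)
  fix h a
    assume a: "a \<in> pos (card_of \<A>)" and leg: "legal_upto q_gr (card_of \<A>) strat h a"
    have ha: "h a \<in> Qset q_gr" using leg a unfolding legal_upto_def pos_le_def by blast
    show "strat (restr (card_of \<A>) h a) a \<in> Qset q_gr \<and> qle q_gr (h a) (strat (restr (card_of \<A>) h a) a)"
    proof (cases a)
      case None
      then show ?thesis using ha qle_refl unfolding strat_def by (simp add: restr_self)
    next
      case (Some G)
      then have "G \<in> \<A>" using a unfolding pos_def Field_card_of by auto
      then have "groupwise_dense G" using A(1) by blast
      then show ?thesis using Dst[OF ha] Some unfolding strat_def by (simp add: restr_self)
    qed
  qed
next
  show "\<not> (\<exists>h. \<forall>a\<in>pos (card_of \<A>). legal_upto q_gr (card_of \<A>) strat h a)"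
  proof
    assume "\<exists>h. \<forall>a\<in>pos (card_of \<A>). legal_upto q_gr (card_of \<A>) strat h a"
    then obtain h where h: "\<forall>a\<in>pos (card_of \<A>). legal_upto q_gr (card_of \<A>) strat h a" by blast
    have Npos: "None \<in> pos (card_of \<A>)" unfolding pos_def by simp
    have legN: "legal_upto q_gr (card_of \<A>) strat h None" using h Npos by blast
    have hN: "h None \<in> Qset q_gr" using legN Npos unfolding legal_upto_def pos_le_def by blast
    have "Uset (h None) \<in> G" if G: "G \<in> \<A>" for G
    proof -
      have Gpos: "Some G \<in> pos (card_of \<A>)" unfolding pos_def Field_card_of using G by simp
      have lt: "pos_lt (card_of \<A>) (Some G) None" by simp
      have hG: "h (Some G) \<in> Qset q_gr"
        using legN Gpos lt unfolding legal_upto_def pos_le_def by blast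
      have "qle q_gr (strat (restr (card_of \<A>) h (Some G)) (Some G)) (h None)"
        using legN Npos Gpos lt unfolding legal_upto_def pos_le_def by blast
      then have le: "qle q_gr (Dst G (h (Some G))) (h None)"
        unfolding strat_def by (simp add: restr_self)
      have gd: "groupwise_dense G" using A(1) G by blast
      note DG = Dst[OF hG gd]
      have fin: "finite (Uset (h None) - Uset (Dst G (h (Some G))))" by (rule qle_fin[OF hN le])
      have clo: "\<forall>A \<in> G. \<forall>B. infinite B \<and> finite (B - A) \<longrightarrow> B \<in> G"
        using gd unfolding groupwise_dense_def by (elim conjE)
      show ?thesis using clo DG Uset_inf[OF hN] fin by blast
    qed
    then have "Uset (h None) \<in> \<Inter>\<A>" by blast
    then show False using A(2) by blast
  qed
qed

theorem mainTheorem2: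
  shows "is_pcrf q_gr \<and> forgetful q_gr
    \<and> (\<forall>\<A> :: nat set set set. (\<forall>G \<in> \<A>. groupwise_dense G) \<and> \<Inter>\<A> = {} \<longrightarrow>
         (\<exists>r :: nat set set rel. Card_order r \<and> (card_of (Field r), card_of \<A>) \<in> ordLeq
            \<and> empty_wins q_gr r))"
proof (intro conjI allI impI)
  show "is_pcrf q_gr" by (rule is_pcrf_gr)
  show "forgetful q_gr" by (rule forgetful_gr)
  fix \<A> :: "nat set set set"
  assume h: "(\<forall>G \<in> \<A>. groupwise_dense G) \<and> \<Inter>\<A> = {}"
  show "\<exists>r :: nat set set rel. Card_order r \<and> (card_of (Field r), card_of \<A>) \<in> ordLeq
            \<and> empty_wins q_gr r"
  proof (intro exI[of _ "(card_of \<A>)"] conjI)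
    show "Card_order (card_of \<A>)" by (rule card_of_Card_order)
    show "(card_of (Field (card_of \<A>)), card_of \<A>) \<in> ordLeq" unfolding Field_card_of
      using ordLeq_refl[OF card_of_Card_order] .
    show "empty_wins q_gr (card_of \<A>)" using h game_part by blast
  qed
qed


end
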